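(* Let $m,n$ be positive integers. Then $\mathrm{RR}(\mathcal{B}_m:\mathcal{B}_n)\leq m\,\mathrm{R}_{2^m-1}(\mathcal{B}_n)+m$.
   Context: $\mathcal{B}_N$ denotes the Boolean lattice of all subsets of $[N]$ ordered by inclusion. An induced copy of a poset $\mathcal{P}$ in a poset $\mathcal{Q}$ is the image of an injection $f:\mathcal{P}\to\mathcal{Q}$ with $f(X)\le f(Y)$ iff $X\le Y$. A colored family is monochromatic if all its sets share a color, rainbow if all its sets have pairwise distinct colors. $\mathrm{R}_k(\mathcal{P})$ is the smallest $n$ such that every coloring of $\mathcal{B}_n$ with $k$ colors contains a monochromatic induced copy of $\mathcal{P}$. The Boolean rainbow Ramsey number $\mathrm{RR}(\mathcal{Q}:\mathcal{P})$ is the smallest $n$ such that every coloring (with any number of colors) of the sets of $\mathcal{B}_n$ contains a rainbow induced copy of $\mathcal{Q}$ or a monochromatic induced copy of $\mathcal{P}$. *)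

theory Defs
  imports Main
begin

definition Bool_lat :: "nat \<Rightarrow> nat set set" where
  "Bool_lat N = Pow {1..N}"

definition induced_copy :: "'a set set \<Rightarrow> 'b set set \<Rightarrow> 'b set set \<Rightarrow> bool" where
  "induced_copy P Q F \<longleftrightarrow>
     (\<exists>f. inj_on f P \<and> f ` P \<subseteq> Q \<and> F = f ` P \<and>
          (\<forall>X\<in>P. \<forall>Y\<in>P. f X \<subseteq> f Y \<longleftrightarrow> X \<subseteq> Y))"

definition monochromatic :: "('b \<Rightarrow> 'c) \<Rightarrow> 'b set \<Rightarrow> bool" where
  "monochromatic col F \<longleftrightarrow> (\<exists>c. \<forall>X\<in>F. col X = c)"

definition rainbow :: "('b \<Rightarrow> 'c) \<Rightarrow> 'b set \<Rightarrow> bool" where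
  "rainbow col F \<longleftrightarrow> inj_on col F"

definition Ramsey_num :: "nat \<Rightarrow> nat set set \<Rightarrow> nat" where
  "Ramsey_num k P = (LEAST n. \<forall>col :: nat set \<Rightarrow> nat.
      (\<forall>X\<in>Bool_lat n. col X < k) \<longrightarrow>
      (\<exists>F. induced_copy P (Bool_lat n) F \<and> monochromatic col F))"

text \<open>RR(Q:P): least n such that every colouring of B_n (with any number of colours;
  since B_n is finite, colours may be taken to be natural numbers) contains a rainbow
  induced copy of Q or a monochromatic induced copy of P.\<close>
definition rainbow_Ramsey_num :: "nat set set \<Rightarrow> nat set set \<Rightarrow> nat" where
  "rainbow_Ramsey_num Q P = (LEAST n. \<forall>col :: nat set \<Rightarrow> nat.
      (\<exists>F. induced_copy Q (Bool_lat n) F \<and> rainbow col F) \<or>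
      (\<exists>F. induced_copy P (Bool_lat n) F \<and> monochromatic col F))"

end

theory Submission
  imports Defs "HOL-Library.FuncSet"
begin

definition ramsey_prop :: "nat \<Rightarrow> nat \<Rightarrow> nat \<Rightarrow> bool" where
  "ramsey_prop k n N \<longleftrightarrow> (\<forall>col :: nat set \<Rightarrow> nat. (\<forall>X\<in>Bool_lat N. col X < k) \<longrightarrow>
      (\<exists>F. induced_copy (Bool_lat n) (Bool_lat N) F \<and> monochromatic col F))"

lemma emb_copy:
  assumes "\<And>X. X \<in> P \<Longrightarrow> f X \<in> Q"
    and "\<And>X Y. X \<in> P \<Longrightarrow> Y \<in> P \<Longrightarrow> f X \<subseteq> f Y \<longleftrightarrow> X \<subseteq> Y"
  shows "induced_copy P Q (f ` P)"
proof -
  have "inj_on f P" by (rule inj_onI) (metis assms(2) subset_antisym order_refl)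
  thus ?thesis unfolding induced_copy_def using assms by blast
qed

lemma copy_compose:
  assumes "induced_copy P Q F" "\<And>X. X \<in> Q \<Longrightarrow> e X \<in> Q'"
    "\<And>X Y. X \<in> Q \<Longrightarrow> Y \<in> Q \<Longrightarrow> e X \<subseteq> e Y \<longleftrightarrow> X \<subseteq> Y"
  shows "induced_copy P Q' (e ` F)"
proof -
  from assms(1) obtain f where f: "f ` P \<subseteq> Q" "F = f ` P"
    "\<forall>X\<in>P. \<forall>Y\<in>P. f X \<subseteq> f Y \<longleftrightarrow> X \<subseteq> Y" unfolding induced_copy_def by blast
  have "induced_copy P Q' ((e \<circ> f) ` P)" apply (rule emb_copy)
    subgoal using f assms(2) by auto
    subgoal for X Y using f assms(3)[of "f X" "f Y"] by auto
    done
  thus ?thesis using f by (simp add: image_comp)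
qed

lemma ramsey_exists: "\<exists>N. ramsey_prop k n N"
proof (induction n)
  case 0
  have "ramsey_prop k 0 0"
    unfolding ramsey_prop_def
  proof (intro allI impI)
    fix col :: "nat set \<Rightarrow> nat"
    have "induced_copy (Bool_lat 0) (Bool_lat 0) (id ` Bool_lat 0)" by (rule emb_copy) auto
    moreover have "monochromatic col (id ` Bool_lat 0)" unfolding monochromatic_def Bool_lat_def by auto
    ultimately show "\<exists>F. induced_copy (Bool_lat 0) (Bool_lat 0) F \<and> monochromatic col F" by blast
  qed
  thus ?case by blast
next
  case (Suc n)
  then obtain a where Ha: "ramsey_prop k n a" by blast
  define L where "L = (Bool_lat n \<rightarrow>\<^sub>E Bool_lat a) \<times> {..<k}"
  have finL: "finite L" unfolding L_def Bool_lat_def by (intro finite_cartesian_product finite_PiE) auto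
  define K where "K = card L"
  define T where "T = (\<lambda>j::nat. {a+1..a+j})"
  have "ramsey_prop k (Suc n) (a + K)"
    unfolding ramsey_prop_def
  proof (intro allI impI)
    fix c :: "nat set \<Rightarrow> nat"
    assume hc: "\<forall>X\<in>Bool_lat (a+K). c X < k"
    have ex: "\<forall>j\<in>{0..K}. \<exists>p. p \<in> L \<and> (\<forall>X\<in>Bool_lat n. \<forall>Y\<in>Bool_lat n. fst p X \<subseteq> fst p Y \<longleftrightarrow> X \<subseteq> Y)
       \<and> (\<forall>X\<in>Bool_lat n. c (fst p X \<union> T j) = snd p)"
    proof
      fix j assume j: "j \<in> {0..K}"
      have inb: "X \<union> T j \<in> Bool_lat (a+K)" if "X \<in> Bool_lat a" for X
        using that j unfolding Bool_lat_def T_def by auto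
      have "\<forall>X\<in>Bool_lat a. (\<lambda>X. c (X \<union> T j)) X < k" using inb hc by auto
      then obtain F where F: "induced_copy (Bool_lat n) (Bool_lat a) F" "monochromatic (\<lambda>X. c (X \<union> T j)) F"
        using Ha[unfolded ramsey_prop_def, rule_format, of "\<lambda>X. c (X \<union> T j)"] by blast
      from F(1) obtain g where g: "g ` Bool_lat n \<subseteq> Bool_lat a" "F = g ` Bool_lat n"
        "\<forall>X\<in>Bool_lat n. \<forall>Y\<in>Bool_lat n. g X \<subseteq> g Y \<longleftrightarrow> X \<subseteq> Y" unfolding induced_copy_def by blast
      from F(2) obtain d where d: "\<forall>X\<in>F. c (X \<union> T j) = d" unfolding monochromatic_def by blast
      have e0: "{} \<in> Bool_lat n" unfolding Bool_lat_def by auto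
      hence "g {} \<in> Bool_lat a" using g(1) by auto
      hence "c (g {} \<union> T j) < k" using inb hc by auto
      moreover have "c (g {} \<union> T j) = d" using d g(2) e0 by auto
      ultimately have dk: "d < k" by simp
      show "\<exists>p. p \<in> L \<and> (\<forall>X\<in>Bool_lat n. \<forall>Y\<in>Bool_lat n. fst p X \<subseteq> fst p Y \<longleftrightarrow> X \<subseteq> Y)
       \<and> (\<forall>X\<in>Bool_lat n. c (fst p X \<union> T j) = snd p)"
        apply (rule exI[of _ "(restrict g (Bool_lat n), d)"])
        using g d dk by (auto simp: L_def)
    qed
    from bchoice[OF ex] obtain lab where lab: "\<forall>j\<in>{0..K}. lab j \<in> L \<and>
       (\<forall>X\<in>Bool_lat n. \<forall>Y\<in>Bool_lat n. fst (lab j) X \<subseteq> fst (lab j) Y \<longleftrightarrow> X \<subseteq> Y)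
       \<and> (\<forall>X\<in>Bool_lat n. c (fst (lab j) X \<union> T j) = snd (lab j))" by blast
    have "\<not> inj_on lab {0..K}"
    proof
      assume "inj_on lab {0..K}"
      hence "card (lab ` {0..K}) = K+1" by (simp add: card_image)
      moreover have "lab ` {0..K} \<subseteq> L" using lab by auto
      hence "card (lab ` {0..K}) \<le> K" using finL K_def card_mono by metis
      ultimately show False by simp
    qed
    then obtain j j' where jj: "j \<in> {0..K}" "j' \<in> {0..K}" "j < j'" "lab j = lab j'"
      unfolding inj_on_def by (metis linorder_neqE_nat)
    define g where "g = fst (lab j)"
    define d where "d = snd (lab j)"
    have gL: "g \<in> Bool_lat n \<rightarrow>\<^sub>E Bool_lat a" using lab jj g_def L_def by (auto simp: mem_Times_iff)
    have gsub: "g X \<subseteq> {1..a}" if "X \<in> Bool_lat n" for X using gL that unfolding Bool_lat_def by auto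
    have gord: "\<forall>X\<in>Bool_lat n. \<forall>Y\<in>Bool_lat n. g X \<subseteq> g Y \<longleftrightarrow> X \<subseteq> Y" using lab jj g_def by auto
    have gc: "\<forall>X\<in>Bool_lat n. c (g X \<union> T j) = d" "\<forall>X\<in>Bool_lat n. c (g X \<union> T j') = d"
      using lab jj g_def d_def by metis+
    define f where "f = (\<lambda>A. if Suc n \<in> A then g (A - {Suc n}) \<union> T j' else g A \<union> T j)"
    have r1: "A - {Suc n} \<in> Bool_lat n" if "A \<in> Bool_lat (Suc n)" for A
      using that unfolding Bool_lat_def by auto
    have r2: "A \<in> Bool_lat n" if "A \<in> Bool_lat (Suc n)" "Suc n \<notin> A" for A
      using that unfolding Bool_lat_def by (auto simp: le_Suc_eq)
    have key1: "U \<union> T i1 \<subseteq> V \<union> T i2 \<longleftrightarrow> U \<subseteq> V" if "U \<subseteq> {1..a}" "V \<subseteq> {1..a}" "i1 \<le> i2" for U V i1 i2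
      using that unfolding T_def subset_iff by (metis UnE UnI1 UnI2 atLeastAtMost_iff add_le_mono1 le_add1 le_trans not_less_eq_eq add_Suc add_le_mono Suc_eq_plus1)
    have key2: "\<not> U \<union> T j' \<subseteq> V \<union> T j" if "V \<subseteq> {1..a}" for U V
    proof
      assume "U \<union> T j' \<subseteq> V \<union> T j"
      moreover have "a + j' \<in> T j'" using jj unfolding T_def by auto
      ultimately have "a + j' \<in> V \<union> T j" by blast
      moreover have "a + j' \<notin> V" using that jj by auto
      moreover have "a + j' \<notin> T j" using jj unfolding T_def by auto
      ultimately show False by blast
    qed
    have "induced_copy (Bool_lat (Suc n)) (Bool_lat (a+K)) (f ` Bool_lat (Suc n))"
    proof (rule emb_copy)
      fix X assume X: "X \<in> Bool_lat (Suc n)"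
      have Tj: "T j \<subseteq> {1..a+K}" "T j' \<subseteq> {1..a+K}" using jj unfolding T_def by auto
      show "f X \<in> Bool_lat (a+K)"
      proof (cases "Suc n \<in> X")
        case True
        thus ?thesis using gsub[OF r1[OF X]] Tj unfolding f_def Bool_lat_def by auto
      next
        case False
        thus ?thesis using gsub[OF r2[OF X False]] Tj unfolding f_def Bool_lat_def by auto
      qed
    next
      fix X Y assume X: "X \<in> Bool_lat (Suc n)" and Y: "Y \<in> Bool_lat (Suc n)"
      show "f X \<subseteq> f Y \<longleftrightarrow> X \<subseteq> Y"
      proof (cases "Suc n \<in> X"; cases "Suc n \<in> Y")
        assume a1: "Suc n \<in> X" and a2: "Suc n \<in> Y"
        have "f X \<subseteq> f Y \<longleftrightarrow> g (X - {Suc n}) \<subseteq> g (Y - {Suc n})"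
          using a1 a2 key1[OF gsub[OF r1[OF X]] gsub[OF r1[OF Y]] order_refl] unfolding f_def by simp
        also have "\<dots> \<longleftrightarrow> X - {Suc n} \<subseteq> Y - {Suc n}" using gord r1[OF X] r1[OF Y] by simp
        finally show ?thesis using a1 a2 by auto
      next
        assume a1: "Suc n \<in> X" and a2: "Suc n \<notin> Y"
        have "\<not> f X \<subseteq> f Y" using a1 a2 key2[OF gsub[OF r2[OF Y a2]]] unfolding f_def by simp
        thus ?thesis using a1 a2 by auto
      next
        assume a1: "Suc n \<notin> X" and a2: "Suc n \<in> Y"
        have "f X \<subseteq> f Y \<longleftrightarrow> g X \<subseteq> g (Y - {Suc n})"
          using a1 a2 key1[OF gsub[OF r2[OF X a1]] gsub[OF r1[OF Y]], of j j'] jj unfolding f_def by simp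
        also have "\<dots> \<longleftrightarrow> X \<subseteq> Y - {Suc n}" using gord r2[OF X a1] r1[OF Y] by simp
        finally show ?thesis using a1 a2 by auto
      next
        assume a1: "Suc n \<notin> X" and a2: "Suc n \<notin> Y"
        have "f X \<subseteq> f Y \<longleftrightarrow> g X \<subseteq> g Y"
          using a1 a2 key1[OF gsub[OF r2[OF X a1]] gsub[OF r2[OF Y a2]] order_refl] unfolding f_def by simp
        also have "\<dots> \<longleftrightarrow> X \<subseteq> Y" using gord r2[OF X a1] r2[OF Y a2] by simp
        finally show ?thesis .
      qed
    qed
    moreover have "c (f A) = d" if "A \<in> Bool_lat (Suc n)" for A
    proof (cases "Suc n \<in> A")
      case True
      thus ?thesis using gc(2) r1[OF that] unfolding f_def by simp
    next
      case False
      thus ?thesis using gc(1) r2[OF that False] unfolding f_def by simp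
    qed
    hence "monochromatic c (f ` Bool_lat (Suc n))"
      unfolding monochromatic_def by auto
    ultimately show "\<exists>F. induced_copy (Bool_lat (Suc n)) (Bool_lat (a+K)) F \<and> monochromatic c F" by blast
  qed
  thus ?case by blast
qed

lemma greedy:
  fixes c :: "'a \<Rightarrow> 'b" and C :: "'i \<Rightarrow> 'a set"
  assumes "finite I" "finite U" "\<And>i. i \<in> I \<Longrightarrow> card U + card I \<le> card (c ` C i)"
  shows "\<exists>g. (\<forall>i\<in>I. g i \<in> C i) \<and> inj_on (c \<circ> g) I \<and> (\<forall>i\<in>I. c (g i) \<notin> U)"
  using assms
proof (induction I arbitrary: U rule: finite_induct)
  case empty thus ?case by auto
next
  case (insert i I)
  have "\<And>j. j \<in> I \<Longrightarrow> card U + card I \<le> card (c ` C j)"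
    using insert.prems(2) insert.hyps by fastforce
  then obtain g where g: "\<forall>j\<in>I. g j \<in> C j" "inj_on (c \<circ> g) I" "\<forall>j\<in>I. c (g j) \<notin> U"
    using insert.IH[OF insert.prems(1)] by blast
  let ?V = "U \<union> (c \<circ> g) ` I"
  have finV: "finite ?V" using insert.prems(1) insert.hyps(1) by simp
  have "card ?V \<le> card U + card ((c \<circ> g) ` I)" by (rule card_Un_le)
  also have "\<dots> \<le> card U + card I" using card_image_le[OF insert.hyps(1)] by simp
  finally have "card ?V < card (c ` C i)" using insert.prems(2)[of i] insert.hyps by simp
  hence "\<not> c ` C i \<subseteq> ?V" using finV card_mono by (metis not_le)
  then obtain x where x: "x \<in> C i" "c x \<notin> ?V" by auto
  define g' where "g' = g(i := x)"
  have eq: "\<forall>j\<in>I. g' j = g j" using insert.hyps(2) g'_def by auto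
  have "inj_on (c \<circ> g') I" using g(2) eq by (metis comp_apply inj_on_cong)
  moreover have "(c \<circ> g') ` I = (c \<circ> g) ` I" using eq by auto
  ultimately have "inj_on (c \<circ> g') (insert i I)" using x insert.hyps(2) g'_def by auto
  moreover have "\<forall>j\<in>insert i I. g' j \<in> C j" using g(1) eq x g'_def by auto
  moreover have "\<forall>j\<in>insert i I. c (g' j) \<notin> U" using g(3) eq x g'_def by auto
  ultimately show ?case by blast
qed

lemma level_emb:
  fixes f :: "nat set \<Rightarrow> nat set" and m R :: nat
  assumes P1: "\<And>A. A \<subseteq> {1..m} \<Longrightarrow> f A \<inter> {1..m} = A"
    and P2: "\<And>A. A \<subseteq> {1..m} \<Longrightarrow> {m+1..m+(card A - 1)*R} \<subseteq> f A"
    and P3: "\<And>A. A \<subseteq> {1..m} \<Longrightarrow> f A \<subseteq> A \<union> {m+1..m+card A*R}"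
    and A: "A \<subseteq> {1..m}" and B: "B \<subseteq> {1..m}"
  shows "f A \<subseteq> f B \<longleftrightarrow> A \<subseteq> B"
proof
  assume "f A \<subseteq> f B" thus "A \<subseteq> B" using P1[OF A] P1[OF B] by blast
next
  assume AB: "A \<subseteq> B"
  show "f A \<subseteq> f B"
  proof (cases "A = B")
    case True thus ?thesis by simp
  next
    case False
    hence ps: "A \<subset> B" using AB by auto
    have finB: "finite B" using B finite_subset by blast
    have lt: "card A < card B" using psubset_card_mono[OF finB ps] .
    hence "card A * R \<le> (card B - 1) * R" by (intro mult_le_mono1) simp
    hence "{m+1..m+card A*R} \<subseteq> {m+1..m+(card B - 1)*R}" by auto
    moreover have "B \<subseteq> f B" using P1[OF B] by blast
    ultimately show ?thesis using P3[OF A] P2[OF B] AB by blast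
  qed
qed

theorem theorem1p5:
  fixes m n :: nat
  assumes "m > 0" and "n > 0"
  shows "rainbow_Ramsey_num (Bool_lat m) (Bool_lat n)
           \<le> m * Ramsey_num (2 ^ m - 1) (Bool_lat n) + m"
proof -
  define k where "k = (2::nat)^m - 1"
  define R where "R = Ramsey_num k (Bool_lat n)"
  have RP: "ramsey_prop k n R"
  proof -
    have "Ramsey_num k (Bool_lat n) = (LEAST N. ramsey_prop k n N)"
      unfolding Ramsey_num_def ramsey_prop_def by simp
    thus ?thesis using LeastI_ex[OF ramsey_exists[of k n]] R_def by simp
  qed
  define N where "N = m * R + m"
  have arith: "(l - 1) * R + R = l * R" if "l \<ge> 1" for l
    using that by (cases l) auto
  have main: "\<forall>col :: nat set \<Rightarrow> nat. (\<exists>F. induced_copy (Bool_lat m) (Bool_lat N) F \<and> rainbow col F) \<or>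
      (\<exists>F. induced_copy (Bool_lat n) (Bool_lat N) F \<and> monochromatic col F)"
  proof
    fix c :: "nat set \<Rightarrow> nat"
    show "(\<exists>F. induced_copy (Bool_lat m) (Bool_lat N) F \<and> rainbow c F) \<or>
      (\<exists>F. induced_copy (Bool_lat n) (Bool_lat N) F \<and> monochromatic c F)"
    proof (rule disjCI)
      assume nomono: "\<not> (\<exists>F. induced_copy (Bool_lat n) (Bool_lat N) F \<and> monochromatic c F)"
      define e where "e = (\<lambda>A T. A \<union> {m+1..m+(card A - 1)*R} \<union> (\<lambda>t. t + (m + (card A - 1)*R)) ` T)"
      define C where "C = (\<lambda>A. e A ` Bool_lat R)"
      have eP1: "e A T \<inter> {1..m} = A" if "A \<subseteq> {1..m}" "T \<subseteq> {1..R}" for A T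
        using that unfolding e_def by auto
      have eP2: "{m+1..m+(card A - 1)*R} \<subseteq> e A T" for A T
        unfolding e_def by auto
      have eP3: "e A T \<subseteq> A \<union> {m+1..m+card A*R}" if "A \<subseteq> {1..m}" "A \<noteq> {}" "T \<subseteq> {1..R}" for A T
      proof -
        have "finite A" using that(1) finite_subset by blast
        hence "card A \<ge> 1" using that(2) by (simp add: Suc_le_eq card_gt_0_iff)
        hence "(card A - 1) * R + R = card A * R" by (rule arith)
        thus ?thesis using that unfolding e_def by auto
      qed
      have cardA: "card A * R \<le> m * R" if "A \<subseteq> {1..m}" for A
      proof -
        have "card A \<le> card {1..m}" using that by (intro card_mono) auto
        thus ?thesis by (intro mult_le_mono1) simp
      qed
      have eN: "e A T \<in> Bool_lat N" if "A \<subseteq> {1..m}" "A \<noteq> {}" "T \<subseteq> {1..R}" for A T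
      proof -
        have "e A T \<subseteq> A \<union> {m+1..m+card A*R}" by (rule eP3[OF that])
        also have "\<dots> \<subseteq> {1..N}" using that(1) cardA[OF that(1)] unfolding N_def by auto
        finally show ?thesis unfolding Bool_lat_def by simp
      qed
      have eord: "e A T \<subseteq> e A T' \<longleftrightarrow> T \<subseteq> T'" if "A \<subseteq> {1..m}" "T \<subseteq> {1..R}" "T' \<subseteq> {1..R}" for A T T'
      proof
        assume sub: "e A T \<subseteq> e A T'"
        show "T \<subseteq> T'"
        proof
          fix x assume x: "x \<in> T"
          hence "x + (m + (card A - 1)*R) \<in> e A T" unfolding e_def by auto
          hence "x + (m + (card A - 1)*R) \<in> e A T'" using sub by auto
          moreover have "x \<ge> 1" using x that(2) by auto
          ultimately show "x \<in> T'" using that(1) unfolding e_def by auto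
        qed
      next
        assume "T \<subseteq> T'" thus "e A T \<subseteq> e A T'" unfolding e_def by auto
      qed
      have many: "2^m \<le> card (c ` C A)" if A: "A \<subseteq> {1..m}" "A \<noteq> {}" for A
      proof (rule ccontr)
        assume "\<not> ?thesis"
        hence cardS: "card (c ` C A) \<le> k" unfolding k_def by simp
        have finS: "finite (c ` C A)" unfolding C_def Bool_lat_def by simp
        obtain h where h: "bij_betw h (c ` C A) {0..<card (c ` C A)}"
          using ex_bij_betw_finite_nat[OF finS] by blast
        define col' where "col' = (\<lambda>T. h (c (e A T)))"
        have "\<forall>T\<in>Bool_lat R. col' T < k"
        proof
          fix T assume "T \<in> Bool_lat R"
          hence "c (e A T) \<in> c ` C A" unfolding C_def by auto
          hence "h (c (e A T)) \<in> {0..<card (c ` C A)}" using h bij_betwE by blast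
          thus "col' T < k" using cardS col'_def by auto
        qed
        then obtain F' where F': "induced_copy (Bool_lat n) (Bool_lat R) F'" "monochromatic col' F'"
          using RP[unfolded ramsey_prop_def, rule_format, of col'] by blast
        have "induced_copy (Bool_lat n) (Bool_lat N) (e A ` F')"
          by (rule copy_compose[OF F'(1)]) (use eN eord A in \<open>auto simp: Bool_lat_def\<close>)
        moreover have "monochromatic c (e A ` F')"
        proof (cases "F' = {}")
          case True thus ?thesis unfolding monochromatic_def by auto
        next
          case False
          then obtain T0 where T0: "T0 \<in> F'" by auto
          have F'R: "F' \<subseteq> Bool_lat R" using F'(1) unfolding induced_copy_def by auto
          from F'(2) obtain d where d: "\<forall>T\<in>F'. col' T = d" unfolding monochromatic_def by blast
          have inS: "c (e A T) \<in> c ` C A" if "T \<in> F'" for T using that F'R unfolding C_def by auto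
          have "\<forall>X\<in>e A ` F'. c X = c (e A T0)"
          proof
            fix X assume "X \<in> e A ` F'"
            then obtain T where T: "T \<in> F'" "X = e A T" by auto
            have "h (c (e A T)) = h (c (e A T0))" using d T T0 col'_def by auto
            hence "c (e A T) = c (e A T0)" using h inS[OF T(1)] inS[OF T0]
              unfolding bij_betw_def inj_on_def by blast
            thus "c X = c (e A T0)" using T by simp
          qed
          thus ?thesis unfolding monochromatic_def by blast
        qed
        ultimately show False using nomono by blast
      qed
      define I where "I = Bool_lat m - {{}}"
      have finI: "finite I" unfolding I_def Bool_lat_def by simp
      have cardI: "card I = 2^m - 1"
        unfolding I_def Bool_lat_def by (simp add: card_Pow)
      have "\<And>A. A \<in> I \<Longrightarrow> card {c {}} + card I \<le> card (c ` C A)"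
      proof -
        fix A assume "A \<in> I"
        hence "2^m \<le> card (c ` C A)" using many unfolding I_def Bool_lat_def by auto
        moreover have "(1::nat) \<le> 2^m" by simp
        ultimately show "card {c {}} + card I \<le> card (c ` C A)" using cardI by simp
      qed
      then obtain g where g: "\<forall>A\<in>I. g A \<in> C A" "inj_on (c \<circ> g) I" "\<forall>A\<in>I. c (g A) \<notin> {c {}}"
        using greedy[OF finI, of "{c {}}" c C] by auto
      define f where "f = (\<lambda>A. if A = {} then {} else g A)"
      have fe: "\<exists>T. T \<subseteq> {1..R} \<and> f A = e A T" if "A \<subseteq> {1..m}" "A \<noteq> {}" for A
      proof -
        have "A \<in> I" using that unfolding I_def Bool_lat_def by auto
        hence "g A \<in> C A" using g(1) by auto
        thus ?thesis using that(2) unfolding C_def Bool_lat_def f_def by auto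
      qed
      have fP1: "f A \<inter> {1..m} = A" if "A \<subseteq> {1..m}" for A
        using fe[OF that] eP1[OF that] unfolding f_def by (cases "A = {}") auto
      have fP2: "{m+1..m+(card A - 1)*R} \<subseteq> f A" if A: "A \<subseteq> {1..m}" for A
      proof (cases "A = {}")
        case True thus ?thesis by simp
      next
        case False
        then obtain T where "f A = e A T" using fe[OF A] by blast
        thus ?thesis using eP2[of A T] by simp
      qed
      have fP3: "f A \<subseteq> A \<union> {m+1..m+card A*R}" if "A \<subseteq> {1..m}" for A
        using fe[OF that] eP3[OF that] unfolding f_def by (cases "A = {}") auto
      have fN: "f A \<in> Bool_lat N" if "A \<subseteq> {1..m}" for A
        using fe[OF that] eN[OF that] unfolding f_def by (cases "A = {}") (auto simp: Bool_lat_def)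
      have "induced_copy (Bool_lat m) (Bool_lat N) (f ` Bool_lat m)"
      proof (rule emb_copy)
        fix X assume "X \<in> Bool_lat m" thus "f X \<in> Bool_lat N" using fN unfolding Bool_lat_def by auto
      next
        fix X Y assume "X \<in> Bool_lat m" "Y \<in> Bool_lat m"
        thus "f X \<subseteq> f Y \<longleftrightarrow> X \<subseteq> Y"
          using level_emb[of m f R X Y, OF fP1 fP2 fP3] unfolding Bool_lat_def by auto
      qed
      moreover have "rainbow c (f ` Bool_lat m)"
      proof -
        have BI: "Bool_lat m = insert {} I" unfolding I_def Bool_lat_def by auto
        have eqI: "\<forall>A\<in>I. (c \<circ> f) A = (c \<circ> g) A" unfolding f_def I_def by auto
        have "inj_on (c \<circ> f) I" using g(2) eqI by (metis inj_on_cong)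
        moreover have "(c \<circ> f) {} \<notin> (c \<circ> f) ` I" using g(3) eqI unfolding f_def by auto
        moreover have "I - {{}} = I" unfolding I_def by auto
        ultimately have "inj_on (c \<circ> f) (insert {} I)" by (simp only: inj_on_insert) simp
        hence "inj_on (c \<circ> f) (Bool_lat m)" using BI by simp
        thus ?thesis unfolding rainbow_def by (rule inj_on_imageI)
      qed
      ultimately show "\<exists>F. induced_copy (Bool_lat m) (Bool_lat N) F \<and> rainbow c F" by blast
    qed
  qed
  have "rainbow_Ramsey_num (Bool_lat m) (Bool_lat n) \<le> N"
    unfolding rainbow_Ramsey_num_def by (rule Least_le) (rule main)
  thus ?thesis by (simp add: N_def R_def k_def)
qed

end
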